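(* Let $\tau$ be an arithmetic signature and let $Q \subseteq \mathrm{STRUC}[\tau]$ be a $\tau$-problem. For each first-order $\tau$-formula $\phi$ (i.e. $\phi \in \mathrm{FO}[+,\times]$) that describes $Q$ eventually, there are quantifier-free $\tau$-formulas $\alpha$ and $\beta$ such that $(\alpha \land \phi) \lor \beta$ describes $Q$.
   Context: Signatures are finite and contain relation symbols and constant symbols, and possibly the special unary function symbol $\mathrm{succ}$; all structures are finite. A signature $\tau$ is arithmetic if it contains the binary relation $<$, the ternary relations $\mathrm{add}$ and $\mathrm{mult}$, the unary function symbol $\mathrm{succ}$ and the constant symbol $0$; in that case $\mathrm{STRUC}[\tau]$ denotes the class of finite $\tau$-structures in which $<$ is a linear order of the universe and $\mathrm{add}$, $\mathrm{mult}$, $\mathrm{succ}$, $0$ have their natural meaning with respect to this order (identifying the universe with $\{0,\dots,n-1\}$ via the order; $0$ is the minimum and the successor of the maximum element is itself). $\mathrm{FO}[+,\times]$ denotes first-order formulas over arithmetic signatures. A $\tau$-problem is a set $Q \subseteq \mathrm{STRUC}[\tau]$ closed under isomorphism. A $\tau$-sentence $\phi$ describes $Q$ if $Q = \{\mathcal A \in \mathrm{STRUC}[\tau] \mid \mathcal A \models \phi\}$, and it describes $Q$ eventually if there is a number $m$ such that for all $\mathcal A \in \mathrm{STRUC}[\tau]$ whose universe has at least $m$ elements we have $\mathcal A \models \phi$ iff $\mathcal A \in Q$. *)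

theory Defs
  imports Main
begin

datatype rsym = LessS | AddS | MultS | RS string
datatype csym = ZeroS | CS string

record sig =
  rels :: "rsym \<Rightarrow> nat option"
  cnsts :: "csym set"
  has_succ :: bool

definition arithmetic_sig :: "sig \<Rightarrow> bool" where
  "arithmetic_sig \<tau> \<longleftrightarrow>
     finite (dom (rels \<tau>)) \<and> finite (cnsts \<tau>) \<and>
     rels \<tau> LessS = Some 2 \<and> rels \<tau> AddS = Some 3 \<and> rels \<tau> MultS = Some 3 \<and>
     ZeroS \<in> cnsts \<tau> \<and> has_succ \<tau>"

datatype trm = Var nat | Const csym | Succ trm

datatype fm =
    Eq trm trm
  | Rel rsym "trm list"
  | Neg fm
  | Conj fm fm
  | Disj fm fm
  | Ex nat fm
  | All nat fm

fun fv_trm :: "trm \<Rightarrow> nat set" where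
  "fv_trm (Var i) = {i}"
| "fv_trm (Const c) = {}"
| "fv_trm (Succ t) = fv_trm t"

fun fv :: "fm \<Rightarrow> nat set" where
  "fv (Eq s t) = fv_trm s \<union> fv_trm t"
| "fv (Rel r ts) = (\<Union>t\<in>set ts. fv_trm t)"
| "fv (Neg \<phi>) = fv \<phi>"
| "fv (Conj \<phi> \<psi>) = fv \<phi> \<union> fv \<psi>"
| "fv (Disj \<phi> \<psi>) = fv \<phi> \<union> fv \<psi>"
| "fv (Ex i \<phi>) = fv \<phi> - {i}"
| "fv (All i \<phi>) = fv \<phi> - {i}"

fun qfree :: "fm \<Rightarrow> bool" where
  "qfree (Eq s t) = True"
| "qfree (Rel r ts) = True"
| "qfree (Neg \<phi>) = qfree \<phi>"
| "qfree (Conj \<phi> \<psi>) = (qfree \<phi> \<and> qfree \<psi>)"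
| "qfree (Disj \<phi> \<psi>) = (qfree \<phi> \<and> qfree \<psi>)"
| "qfree (Ex i \<phi>) = False"
| "qfree (All i \<phi>) = False"

fun sig_trm :: "sig \<Rightarrow> trm \<Rightarrow> bool" where
  "sig_trm \<tau> (Var i) = True"
| "sig_trm \<tau> (Const c) = (c \<in> cnsts \<tau>)"
| "sig_trm \<tau> (Succ t) = (has_succ \<tau> \<and> sig_trm \<tau> t)"

fun sig_fm :: "sig \<Rightarrow> fm \<Rightarrow> bool" where
  "sig_fm \<tau> (Eq s t) = (sig_trm \<tau> s \<and> sig_trm \<tau> t)"
| "sig_fm \<tau> (Rel r ts) = (rels \<tau> r = Some (length ts) \<and> (\<forall>t\<in>set ts. sig_trm \<tau> t))"
| "sig_fm \<tau> (Neg \<phi>) = sig_fm \<tau> \<phi>"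
| "sig_fm \<tau> (Conj \<phi> \<psi>) = (sig_fm \<tau> \<phi> \<and> sig_fm \<tau> \<psi>)"
| "sig_fm \<tau> (Disj \<phi> \<psi>) = (sig_fm \<tau> \<phi> \<and> sig_fm \<tau> \<psi>)"
| "sig_fm \<tau> (Ex i \<phi>) = sig_fm \<tau> \<phi>"
| "sig_fm \<tau> (All i \<phi>) = sig_fm \<tau> \<phi>"

definition sig_sentence :: "sig \<Rightarrow> fm \<Rightarrow> bool" where
  "sig_sentence \<tau> \<phi> \<longleftrightarrow> sig_fm \<tau> \<phi> \<and> fv \<phi> = {}"

text \<open>Since in STRUC[tau] the order is a linear order of the universe with respect to which
  the arithmetic symbols have their natural meaning, every such structure is isomorphic to a
  unique one whose universe is {0,...,n-1} with the natural order. We therefore represent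
  structures canonically on {0..<n} (n \<ge> 1, since the constant 0 must be interpreted).
  Symbols outside the signature get a fixed dummy interpretation, so that distinct
  representations are non-isomorphic structures.\<close>

record struc =
  size :: nat
  relI :: "rsym \<Rightarrow> nat list set"
  constI :: "csym \<Rightarrow> nat"

definition STRUC :: "sig \<Rightarrow> struc set" where
  "STRUC \<tau> = {A. size A \<ge> 1 \<and>
     (\<forall>r. case rels \<tau> r of
            None \<Rightarrow> relI A r = {}
          | Some k \<Rightarrow> relI A r \<subseteq> {xs. length xs = k \<and> (\<forall>x\<in>set xs. x < size A)}) \<and>
     (\<forall>c. if c \<in> cnsts \<tau> then constI A c < size A else constI A c = 0) \<and>
     relI A LessS = {[a, b] | a b. a < b \<and> b < size A} \<and>
     relI A AddS = {[a, b, c] | a b c. a + b = c \<and> a < size A \<and> b < size A \<and> c < size A} \<and>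
     relI A MultS = {[a, b, c] | a b c. a * b = c \<and> a < size A \<and> b < size A \<and> c < size A} \<and>
     constI A ZeroS = 0}"

text \<open>succ is interpreted as the natural successor; the successor of the maximum is itself.\<close>

fun eval_trm :: "struc \<Rightarrow> (nat \<Rightarrow> nat) \<Rightarrow> trm \<Rightarrow> nat" where
  "eval_trm A e (Var i) = e i"
| "eval_trm A e (Const c) = constI A c"
| "eval_trm A e (Succ t) = min (eval_trm A e t + 1) (size A - 1)"

fun sat :: "struc \<Rightarrow> (nat \<Rightarrow> nat) \<Rightarrow> fm \<Rightarrow> bool" where
  "sat A e (Eq s t) = (eval_trm A e s = eval_trm A e t)"
| "sat A e (Rel r ts) = (map (eval_trm A e) ts \<in> relI A r)"
| "sat A e (Neg \<phi>) = (\<not> sat A e \<phi>)"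
| "sat A e (Conj \<phi> \<psi>) = (sat A e \<phi> \<and> sat A e \<psi>)"
| "sat A e (Disj \<phi> \<psi>) = (sat A e \<phi> \<or> sat A e \<psi>)"
| "sat A e (Ex i \<phi>) = (\<exists>a < size A. sat A (e(i := a)) \<phi>)"
| "sat A e (All i \<phi>) = (\<forall>a < size A. sat A (e(i := a)) \<phi>)"

text \<open>Truth of a sentence (assignment irrelevant; we use the all-zero one).\<close>

definition models :: "struc \<Rightarrow> fm \<Rightarrow> bool" where
  "models A \<phi> \<longleftrightarrow> sat A (\<lambda>_. 0) \<phi>"

definition problem :: "sig \<Rightarrow> struc set \<Rightarrow> bool" where
  "problem \<tau> Q \<longleftrightarrow> Q \<subseteq> STRUC \<tau>"

definition describes :: "sig \<Rightarrow> fm \<Rightarrow> struc set \<Rightarrow> bool" where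
  "describes \<tau> \<phi> Q \<longleftrightarrow> sig_sentence \<tau> \<phi> \<and> Q = {A \<in> STRUC \<tau>. models A \<phi>}"

definition describes_eventually :: "sig \<Rightarrow> fm \<Rightarrow> struc set \<Rightarrow> bool" where
  "describes_eventually \<tau> \<phi> Q \<longleftrightarrow> sig_sentence \<tau> \<phi> \<and>
     (\<exists>m. \<forall>A \<in> STRUC \<tau>. size A \<ge> m \<longrightarrow> (models A \<phi> \<longleftrightarrow> A \<in> Q))"

end

theory Submission
  imports Defs
begin

fun shannon :: "fm list \<Rightarrow> (bool list \<Rightarrow> bool) \<Rightarrow> fm" where
  "shannon [] P = (if P [] then Eq (Const ZeroS) (Const ZeroS) else Neg (Eq (Const ZeroS) (Const ZeroS)))"
| "shannon (a # as) P = Disj (Conj a (shannon as (\<lambda>v. P (True # v))))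
                              (Conj (Neg a) (shannon as (\<lambda>v. P (False # v))))"

lemma sat_shannon: "sat A e (shannon as P) = P (map (sat A e) as)"
proof (induction as arbitrary: P)
  case Nil
  then show ?case by simp
next
  case (Cons a as)
  then show ?case by (cases "sat A e a") simp_all
qed

lemma shannon_props:
  assumes "ZeroS \<in> cnsts \<tau>" "\<forall>a\<in>set as. sig_fm \<tau> a \<and> qfree a \<and> fv a = {}"
  shows "sig_fm \<tau> (shannon as P) \<and> qfree (shannon as P) \<and> fv (shannon as P) = {}"
  using assms(2)
proof (induction as arbitrary: P)
  case Nil
  then show ?case using assms(1) by simp
next
  case (Cons a as)
  then show ?case by simp
qed

fun nn :: "nat \<Rightarrow> trm" where
  "nn 0 = Const ZeroS"
| "nn (Suc k) = Succ (nn k)"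

lemma STRUC_const_all: "A \<in> STRUC \<tau> \<Longrightarrow> (\<forall>c. if c \<in> cnsts \<tau> then constI A c < size A else constI A c = 0)"
  unfolding STRUC_def mem_Collect_eq by (elim conjE) assumption
lemma STRUC_rel_all: "A \<in> STRUC \<tau> \<Longrightarrow> (\<forall>r. case rels \<tau> r of
            None \<Rightarrow> relI A r = {}
          | Some k \<Rightarrow> relI A r \<subseteq> {xs. length xs = k \<and> (\<forall>x\<in>set xs. x < size A)})"
  unfolding STRUC_def mem_Collect_eq by (elim conjE) assumption
lemma STRUC_size: "A \<in> STRUC \<tau> \<Longrightarrow> size A \<ge> 1"
  unfolding STRUC_def mem_Collect_eq by (elim conjE) assumption
lemma STRUC_const: "A \<in> STRUC \<tau> \<Longrightarrow> (if c \<in> cnsts \<tau> then constI A c < size A else constI A c = 0)"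
  using STRUC_const_all by blast

lemma STRUC_rel: "A \<in> STRUC \<tau> \<Longrightarrow> (case rels \<tau> r of
            None \<Rightarrow> relI A r = {}
          | Some k \<Rightarrow> relI A r \<subseteq> {xs. length xs = k \<and> (\<forall>x\<in>set xs. x < size A)})"
  using STRUC_rel_all by blast

lemma nn_props: "arithmetic_sig \<tau> \<Longrightarrow> sig_trm \<tau> (nn k) \<and> fv_trm (nn k) = {}"
  by (induction k) (auto simp: arithmetic_sig_def)

lemma STRUC_zero: "A \<in> STRUC \<tau> \<Longrightarrow> constI A ZeroS = 0"
  unfolding STRUC_def mem_Collect_eq by (elim conjE) assumption

lemma eval_nn: "A \<in> STRUC \<tau> \<Longrightarrow> eval_trm A e (nn k) = min k (size A - 1)"
  by (induction k) (auto simp: STRUC_zero)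

definition atoms :: "sig \<Rightarrow> nat \<Rightarrow> fm list" where
  "atoms \<tau> m =
    map (\<lambda>i. Eq (nn i) (nn (Suc i))) [0..<Suc m] @
    concat (map (\<lambda>c. map (\<lambda>i. Eq (Const c) (nn i)) [0..<m]) (SOME cs. set cs = cnsts \<tau>)) @
    concat (map (\<lambda>r. map (\<lambda>xs. Rel r (map nn xs)) (List.n_lists (the (rels \<tau> r)) [0..<m]))
       (SOME rs. set rs = dom (rels \<tau>)))"

lemma set_cs: "arithmetic_sig \<tau> \<Longrightarrow> set (SOME cs. set cs = cnsts \<tau>) = cnsts \<tau>"
  unfolding arithmetic_sig_def by (metis (mono_tags, lifting) finite_list someI_ex)

lemma set_rs: "arithmetic_sig \<tau> \<Longrightarrow> set (SOME rs. set rs = dom (rels \<tau>)) = dom (rels \<tau>)"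
  unfolding arithmetic_sig_def by (metis (mono_tags, lifting) finite_list someI_ex)

lemma atoms_props:
  assumes "arithmetic_sig \<tau>"
  shows "\<forall>a\<in>set (atoms \<tau> m). sig_fm \<tau> a \<and> qfree a \<and> fv a = {}"
  using nn_props[OF assms] set_cs[OF assms] set_rs[OF assms] assms
  by (auto simp: atoms_def set_n_lists arithmetic_sig_def)

lemma size_atom:
  assumes "A \<in> STRUC \<tau>"
  shows "sat A e (Eq (nn i) (nn (Suc i))) = (size A \<le> Suc i)"
  using assms by (auto simp: eval_nn)

lemma size_atom_mem: "i \<le> m \<Longrightarrow> Eq (nn i) (nn (Suc i)) \<in> set (atoms \<tau> m)"
  unfolding atoms_def set_append set_map
  apply (rule UnI1)
  apply (rule image_eqI[of _ _ i])
   apply simp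
  apply (simp only: set_upt atLeastLessThan_iff)
  apply linarith
  done

lemma const_atom_mem:
  assumes tau: "arithmetic_sig \<tau>" and c: "c \<in> cnsts \<tau>" and k: "k < m"
  shows "Eq (Const c) (nn k) \<in> set (atoms \<tau> m)"
proof -
  have 1: "Eq (Const c) (nn k) \<in> set (map (\<lambda>i. Eq (Const c) (nn i)) [0..<m])"
    unfolding set_map by (rule image_eqI[of _ _ k]) (simp_all add: k)
  have "c \<in> set (SOME cs. set cs = cnsts \<tau>)" using set_cs[OF tau] c by simp
  hence "Eq (Const c) (nn k) \<in> set (concat (map (\<lambda>c. map (\<lambda>i. Eq (Const c) (nn i)) [0..<m]) (SOME cs. set cs = cnsts \<tau>)))"
    unfolding set_concat set_map using 1 by blast
  thus ?thesis unfolding atoms_def set_append by blast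
qed

lemma rel_atom_mem:
  assumes tau: "arithmetic_sig \<tau>" and r: "rels \<tau> r = Some k" and xs: "length xs = k" "\<forall>x\<in>set xs. x < m"
  shows "Rel r (map nn xs) \<in> set (atoms \<tau> m)"
proof -
  have "xs \<in> set (List.n_lists (the (rels \<tau> r)) [0..<m])"
    using r xs unfolding set_n_lists by auto
  hence 1: "Rel r (map nn xs) \<in> set (map (\<lambda>xs. Rel r (map nn xs)) (List.n_lists (the (rels \<tau> r)) [0..<m]))"
    by simp
  have "r \<in> set (SOME rs. set rs = dom (rels \<tau>))" using set_rs[OF tau] r by auto
  hence "Rel r (map nn xs) \<in> set (concat (map (\<lambda>r. map (\<lambda>xs. Rel r (map nn xs)) (List.n_lists (the (rels \<tau> r)) [0..<m]))
       (SOME rs. set rs = dom (rels \<tau>))))"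
    unfolding set_concat set_map using 1 by blast
  thus ?thesis unfolding atoms_def set_append by blast
qed

lemma agree:
  assumes tau: "arithmetic_sig \<tau>" and A: "A \<in> STRUC \<tau>" and B: "B \<in> STRUC \<tau>"
    and sz: "size A \<le> m" and ag: "\<forall>a\<in>set (atoms \<tau> m). sat A e a = sat B e a"
  shows "A = B"
proof -
  have A1: "size A \<ge> 1" and B1: "size B \<ge> 1" using STRUC_size[OF A] STRUC_size[OF B] by blast+
  have "sat A e (Eq (nn (size A - 1)) (nn (Suc (size A - 1))))"
    using size_atom[OF A, of e "size A - 1"] A1 by simp
  moreover have "Eq (nn (size A - 1)) (nn (Suc (size A - 1))) \<in> set (atoms \<tau> m)"
    using sz A1 by (intro size_atom_mem) simp
  ultimately have "sat B e (Eq (nn (size A - 1)) (nn (Suc (size A - 1))))" using ag by blast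
  hence "size B \<le> Suc (size A - 1)" using size_atom[OF B, of e "size A - 1"] by blast
  hence le1: "size B \<le> size A" using A1 by simp
  have "sat B e (Eq (nn (size B - 1)) (nn (Suc (size B - 1))))"
    using size_atom[OF B, of e "size B - 1"] B1 by simp
  moreover have "Eq (nn (size B - 1)) (nn (Suc (size B - 1))) \<in> set (atoms \<tau> m)"
    using sz le1 B1 by (intro size_atom_mem) simp
  ultimately have "sat A e (Eq (nn (size B - 1)) (nn (Suc (size B - 1))))" using ag by blast
  hence "size A \<le> Suc (size B - 1)" using size_atom[OF A, of e "size B - 1"] by blast
  hence le2: "size A \<le> size B" using B1 by simp
  have S: "size A = size B" using le1 le2 by simp
  have evA: "\<And>x. x < size A \<Longrightarrow> eval_trm A e (nn x) = x" using eval_nn[OF A] by simp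
  have evB: "\<And>x. x < size A \<Longrightarrow> eval_trm B e (nn x) = x" using eval_nn[OF B] S by simp
  have C: "constI A c = constI B c" for c
  proof (cases "c \<in> cnsts \<tau>")
    case True
    have lA: "constI A c < size A" and lB: "constI B c < size A"
      using STRUC_const[OF A, of c] STRUC_const[OF B, of c] True S by auto
    have "Eq (Const c) (nn (constI A c)) \<in> set (atoms \<tau> m)"
      using const_atom_mem[OF tau True] lA sz by simp
    moreover have "sat A e (Eq (Const c) (nn (constI A c)))" using evA lA by simp
    ultimately have "sat B e (Eq (Const c) (nn (constI A c)))" using ag by blast
    thus ?thesis using evB lA by simp
  next
    case False
    then show ?thesis using STRUC_const[OF A, of c] STRUC_const[OF B, of c] by simp
  qed
  have R: "relI A r = relI B r" for r
  proof (cases "rels \<tau> r")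
    case None
    then show ?thesis using STRUC_rel[OF A, of r] STRUC_rel[OF B, of r] by simp
  next
    case (Some k)
    have subA: "relI A r \<subseteq> {xs. length xs = k \<and> (\<forall>x\<in>set xs. x < size A)}"
      using STRUC_rel[OF A, of r] Some by simp
    have subB: "relI B r \<subseteq> {xs. length xs = k \<and> (\<forall>x\<in>set xs. x < size A)}"
      using STRUC_rel[OF B, of r] Some S by simp
    have mem: "Rel r (map nn xs) \<in> set (atoms \<tau> m)" if "length xs = k" "\<forall>x\<in>set xs. x < size A" for xs
    proof -
      have "\<forall>x\<in>set xs. x < m" using that(2) sz by fastforce
      thus ?thesis using rel_atom_mem[OF tau Some that(1)] by blast
    qed
    have mA: "map (eval_trm A e) (map nn xs) = xs" if "\<forall>x\<in>set xs. x < size A" for xs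
      using that evA by (induction xs) auto
    have mB: "map (eval_trm B e) (map nn xs) = xs" if "\<forall>x\<in>set xs. x < size A" for xs
      using that evB by (induction xs) auto
    show ?thesis
    proof
      show "relI A r \<subseteq> relI B r"
      proof
        fix xs assume xs: "xs \<in> relI A r"
        hence p: "length xs = k" "\<forall>x\<in>set xs. x < size A" using subA by auto
        have "sat A e (Rel r (map nn xs))" using xs mA[OF p(2)] by simp
        hence "sat B e (Rel r (map nn xs))" using ag mem[OF p] by blast
        thus "xs \<in> relI B r" using mB[OF p(2)] by simp
      qed
      show "relI B r \<subseteq> relI A r"
      proof
        fix xs assume xs: "xs \<in> relI B r"
        hence p: "length xs = k" "\<forall>x\<in>set xs. x < size A" using subB by auto
        have "sat B e (Rel r (map nn xs))" using xs mB[OF p(2)] by simp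
        hence "sat A e (Rel r (map nn xs))" using ag mem[OF p] by blast
        thus "xs \<in> relI A r" using mA[OF p(2)] by simp
      qed
    qed
  qed
  show ?thesis using S C R by (intro struc.equality) auto
qed

theorem lemma2p1:
  fixes \<tau> :: sig and Q :: "struc set" and \<phi> :: fm
  assumes "arithmetic_sig \<tau>"
    and "problem \<tau> Q"
    and "describes_eventually \<tau> \<phi> Q"
  shows "\<exists>\<alpha> \<beta>. sig_fm \<tau> \<alpha> \<and> qfree \<alpha> \<and> sig_fm \<tau> \<beta> \<and> qfree \<beta> \<and>
           describes \<tau> (Disj (Conj \<alpha> \<phi>) \<beta>) Q"
proof -
  note tau = assms(1)
  have QS: "Q \<subseteq> STRUC \<tau>" using assms(2) by (simp add: problem_def)
  obtain M where M: "\<forall>A \<in> STRUC \<tau>. size A \<ge> M \<longrightarrow> (models A \<phi> \<longleftrightarrow> A \<in> Q)"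
    and sph: "sig_sentence \<tau> \<phi>"
    using assms(3) by (auto simp: describes_eventually_def)
  define m where "m = Suc M"
  define z :: "nat \<Rightarrow> nat" where "z = (\<lambda>_. 0)"
  define L where "L = atoms \<tau> m"
  define P where "P = (\<lambda>v. \<exists>A\<in>Q. size A \<le> m \<and> map (sat A z) L = v)"
  define \<beta> where "\<beta> = shannon L P"
  define \<alpha> where "\<alpha> = Neg (Eq (nn M) (nn (Suc M)))"
  have Z: "ZeroS \<in> cnsts \<tau>" using tau by (simp add: arithmetic_sig_def)
  have bp: "sig_fm \<tau> \<beta> \<and> qfree \<beta> \<and> fv \<beta> = {}"
    unfolding \<beta>_def L_def using shannon_props[OF Z atoms_props[OF tau]] by blast
  have ap: "sig_fm \<tau> \<alpha> \<and> qfree \<alpha> \<and> fv \<alpha> = {}"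
  proof -
    have "has_succ \<tau>" using tau by (simp add: arithmetic_sig_def)
    then show ?thesis unfolding \<alpha>_def using nn_props[OF tau] by simp
  qed
  have key: "models B (Disj (Conj \<alpha> \<phi>) \<beta>) \<longleftrightarrow> B \<in> Q" if B: "B \<in> STRUC \<tau>" for B
  proof -
    have "sat B z \<alpha> \<longleftrightarrow> \<not> size B \<le> Suc M" unfolding \<alpha>_def sat.simps(3)
      using size_atom[OF B, of z M] by blast
    hence sa: "sat B z \<alpha> \<longleftrightarrow> size B > m" unfolding m_def by (metis not_le)
    have sb: "sat B z \<beta> \<longleftrightarrow> size B \<le> m \<and> B \<in> Q"
    proof
      assume "sat B z \<beta>"
      then obtain A where A: "A \<in> Q" "size A \<le> m" "map (sat A z) L = map (sat B z) L"
        unfolding \<beta>_def sat_shannon P_def by blast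
      have "A = B" using agree[OF tau _ B A(2)] A QS unfolding L_def
        by (metis map_eq_conv subsetD)
      thus "size B \<le> m \<and> B \<in> Q" using A by simp
    next
      assume "size B \<le> m \<and> B \<in> Q"
      thus "sat B z \<beta>" unfolding \<beta>_def sat_shannon P_def by blast
    qed
    have mB: "models B (Disj (Conj \<alpha> \<phi>) \<beta>) \<longleftrightarrow> (sat B z \<alpha> \<and> models B \<phi>) \<or> sat B z \<beta>"
      unfolding models_def z_def by simp
    show ?thesis
    proof (cases "size B > m")
      case True
      hence "models B \<phi> \<longleftrightarrow> B \<in> Q" using M B unfolding m_def by auto
      then show ?thesis using mB sa sb True by auto
    next
      case False
      then show ?thesis using mB sa sb by auto
    qed
  qed
  show ?thesis
    apply (rule exI[of _ \<alpha>], rule exI[of _ \<beta>])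
    using ap bp sph key QS unfolding describes_def sig_sentence_def by auto
qed

end
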